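(* Let $H$ be a strongly connected simple digraph, let $k$ be a positive integer, and let $T$ be a tournament that does not contain $k$ pairwise vertex-disjoint topological minor copies of $H$. Then there is a set $X$ of at most $2d_{\mathrm{pw}}\|H\|\cdot k\log k$ vertices of $T$ such that $T-X$ does not contain $H$ as a topological minor.
   Context: $\|H\|:=|V(H)|+|A(H)|$; logarithms are base 2. A tournament is a simple digraph with exactly one arc between every pair of distinct vertices. A topological minor copy of $H$ in a digraph $G$ is a subgraph $\widehat H$ of $G$ with a map sending vertices of $H$ to distinct vertices of $\widehat H$ and arcs $(u,v)$ of $H$ to directed paths from the image of $u$ to the image of $v$ that are internally vertex-disjoint, contain no image of a vertex of $H$ as an internal vertex, and together cover every arc and every non-image vertex of $\widehat H$ exactly once; $G$ contains $H$ as a topological minor if it has such a subgraph. An interval decomposition of $T$ assigns to each vertex $v$ a nonempty closed integer interval $I(v)$ such that whenever $\max I(u)<\min I(v)$ the arc between $u,v$ is $(u,v)$; its width is $\max_{\alpha\in\mathbb{Z}}|\{v:\alpha\in I(v)\}|$, and $\mathrm{pw}(T)$ is the minimum width. $d_{\mathrm{pw}}$ is a fixed constant such that every tournament not containing a simple digraph $H'$ as a topological minor has pathwidth at most $d_{\mathrm{pw}}\|H'\|$ (such a constant exists by a result of Fomin and Pilipczuk). *)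

theory Defs
  imports Complex_Main
begin

type_synonym 'a digraph = "'a set \<times> ('a \<times> 'a) set"

definition verts :: "'a digraph \<Rightarrow> 'a set" where "verts G = fst G"
definition arcs :: "'a digraph \<Rightarrow> ('a \<times> 'a) set" where "arcs G = snd G"

definition simple_digraph :: "'a digraph \<Rightarrow> bool" where
  "simple_digraph G \<longleftrightarrow> finite (verts G) \<and> arcs G \<subseteq> verts G \<times> verts G
     \<and> (\<forall>v. (v, v) \<notin> arcs G)"

definition tournament :: "'a digraph \<Rightarrow> bool" where
  "tournament T \<longleftrightarrow> simple_digraph T \<and>
     (\<forall>u\<in>verts T. \<forall>v\<in>verts T. u \<noteq> v \<longrightarrow> ((u, v) \<in> arcs T \<longleftrightarrow> (v, u) \<notin> arcs T))"

definition strongly_connected :: "'a digraph \<Rightarrow> bool" where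
  "strongly_connected G \<longleftrightarrow> (\<forall>u\<in>verts G. \<forall>v\<in>verts G. (u, v) \<in> (arcs G)\<^sup>*)"

definition gsize :: "'a digraph \<Rightarrow> nat" where
  "gsize G = card (verts G) + card (arcs G)"

definition is_dpath :: "'a digraph \<Rightarrow> 'a list \<Rightarrow> bool" where
  "is_dpath G p \<longleftrightarrow> length p \<ge> 2 \<and> distinct p \<and> set p \<subseteq> verts G \<and>
     (\<forall>i. Suc i < length p \<longrightarrow> (p ! i, p ! Suc i) \<in> arcs G)"

definition path_arcs :: "'a list \<Rightarrow> ('a \<times> 'a) set" where
  "path_arcs p = {(p ! i, p ! Suc i) | i. Suc i < length p}"

definition inner_verts :: "'a list \<Rightarrow> 'a set" where
  "inner_verts p = set (butlast (tl p))"

definition tm_model :: "'a digraph \<Rightarrow> 'b digraph \<Rightarrow> ('b \<Rightarrow> 'a) \<Rightarrow> ('b \<times> 'b \<Rightarrow> 'a list) \<Rightarrow> bool" where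
  "tm_model G H \<phi> P \<longleftrightarrow>
     inj_on \<phi> (verts H) \<and> \<phi> ` verts H \<subseteq> verts G \<and>
     (\<forall>a\<in>arcs H. is_dpath G (P a) \<and> hd (P a) = \<phi> (fst a) \<and> last (P a) = \<phi> (snd a)
                  \<and> inner_verts (P a) \<inter> \<phi> ` verts H = {}) \<and>
     (\<forall>a\<in>arcs H. \<forall>b\<in>arcs H. a \<noteq> b \<longrightarrow>
         inner_verts (P a) \<inter> inner_verts (P b) = {} \<and> path_arcs (P a) \<inter> path_arcs (P b) = {})"

definition tm_verts :: "'b digraph \<Rightarrow> ('b \<Rightarrow> 'a) \<Rightarrow> ('b \<times> 'b \<Rightarrow> 'a list) \<Rightarrow> 'a set" where
  "tm_verts H \<phi> P = \<phi> ` verts H \<union> (\<Union>a\<in>arcs H. set (P a))"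

definition contains_tm :: "'a digraph \<Rightarrow> 'b digraph \<Rightarrow> bool" where
  "contains_tm G H \<longleftrightarrow> (\<exists>\<phi> P. tm_model G H \<phi> P)"

definition contains_k_disjoint_tm :: "nat \<Rightarrow> 'a digraph \<Rightarrow> 'b digraph \<Rightarrow> bool" where
  "contains_k_disjoint_tm k G H \<longleftrightarrow>
     (\<exists>\<phi> P. (\<forall>i<k. tm_model G H (\<phi> i) (P i)) \<and>
        (\<forall>i<k. \<forall>j<k. i \<noteq> j \<longrightarrow> tm_verts H (\<phi> i) (P i) \<inter> tm_verts H (\<phi> j) (P j) = {}))"

definition del_verts :: "'a digraph \<Rightarrow> 'a set \<Rightarrow> 'a digraph" where
  "del_verts G X = (verts G - X, arcs G \<inter> ((verts G - X) \<times> (verts G - X)))"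

definition interval_decomp :: "'a digraph \<Rightarrow> ('a \<Rightarrow> int) \<Rightarrow> ('a \<Rightarrow> int) \<Rightarrow> bool" where
  "interval_decomp T l r \<longleftrightarrow> (\<forall>v\<in>verts T. l v \<le> r v) \<and>
     (\<forall>u\<in>verts T. \<forall>v\<in>verts T. r u < l v \<longrightarrow> (u, v) \<in> arcs T)"

definition decomp_width :: "'a digraph \<Rightarrow> ('a \<Rightarrow> int) \<Rightarrow> ('a \<Rightarrow> int) \<Rightarrow> nat" where
  "decomp_width T l r = Max (range (\<lambda>\<alpha>::int. card {v\<in>verts T. l v \<le> \<alpha> \<and> \<alpha> \<le> r v}))"

definition pathwidth :: "'a digraph \<Rightarrow> nat" where
  "pathwidth T = (LEAST w. \<exists>l r. interval_decomp T l r \<and> decomp_width T l r = w)"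

text \<open>d is an admissible value of the constant d_pw (Fomin--Pilipczuk): every tournament not
  containing a simple digraph H' as a topological minor has pathwidth at most d * \<parallel>H'\<parallel>.
  Finite digraphs are represented up to isomorphism on vertex type nat.\<close>
definition dpw_constant :: "real \<Rightarrow> bool" where
  "dpw_constant d \<longleftrightarrow> (\<forall>(T::nat digraph) (H'::nat digraph).
      tournament T \<longrightarrow> simple_digraph H' \<longrightarrow> \<not> contains_tm T H' \<longrightarrow>
      real (pathwidth T) \<le> d * real (gsize H'))"

end

theory Submission
  imports Defs "HOL-Library.Nat_Bijection"
begin


lemma len2_split:
  assumes "length p \<ge> 2"
  obtains x ms y where "p = x # ms @ [y]"
proof -
  obtain x q where p: "p = x # q" using assms by (cases p) auto
  then have "q \<noteq> []" using assms by auto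
  then obtain ms y where "q = ms @ [y]" by (cases q rule: rev_cases) auto
  with p show ?thesis using that by blast
qed

lemma dpath_set:
  assumes "is_dpath G p"
  shows "set p = inner_verts p \<union> {hd p, last p}"
proof -
  from assms have "length p \<ge> 2" by (simp add: is_dpath_def)
  then obtain x ms y where "p = x # ms @ [y]" by (rule len2_split)
  then show ?thesis by (auto simp: inner_verts_def)
qed

lemma inner_sub: "inner_verts p \<subseteq> set p"
  unfolding inner_verts_def by (cases p) (auto dest: in_set_butlastD)

lemma path_arcs_sub: "path_arcs p \<subseteq> set p \<times> set p"
  unfolding path_arcs_def by auto

lemma tm_verts_sub:
  assumes "tm_model G H \<phi> P"
  shows "tm_verts H \<phi> P \<subseteq> verts G"
proof -
  have 1: "\<phi> ` verts H \<subseteq> verts G" and 2: "\<forall>a\<in>arcs H. is_dpath G (P a)"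
    using assms unfolding tm_model_def by auto
  have "set (P a) \<subseteq> verts G" if "a \<in> arcs H" for a using 2 that unfolding is_dpath_def by auto
  then show ?thesis using 1 unfolding tm_verts_def by auto
qed

lemma tm_verts_inner:
  assumes m: "tm_model G H \<phi> P" and s: "simple_digraph H"
  shows "tm_verts H \<phi> P = \<phi> ` verts H \<union> (\<Union>a\<in>arcs H. inner_verts (P a))"
proof -
  have h1: "set (P a) = inner_verts (P a) \<union> {\<phi> (fst a), \<phi> (snd a)}" if "a \<in> arcs H" for a
    using that m dpath_set[of G "P a"] unfolding tm_model_def by auto
  have h2: "fst a \<in> verts H \<and> snd a \<in> verts H" if "a \<in> arcs H" for a
    using that s unfolding simple_digraph_def by auto
  show ?thesis unfolding tm_verts_def
  proof (intro equalityI subsetI)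
    fix x assume "x \<in> \<phi> ` verts H \<union> (\<Union>a\<in>arcs H. set (P a))"
    then consider "x \<in> \<phi> ` verts H" | "x \<in> (\<Union>a\<in>arcs H. set (P a))" by blast
    then show "x \<in> \<phi> ` verts H \<union> (\<Union>a\<in>arcs H. inner_verts (P a))"
    proof cases
      case 1 then show ?thesis by blast
    next
      case 2
      then have "x \<in> (\<Union>a\<in>arcs H. set (P a))" by simp
      then obtain a where a: "a \<in> arcs H" "x \<in> set (P a)" by blast
      then have "x \<in> inner_verts (P a) \<or> x = \<phi> (fst a) \<or> x = \<phi> (snd a)" using h1[OF a(1)] by blast
      moreover have "fst a \<in> verts H" "snd a \<in> verts H" using h2[OF a(1)] by auto
      moreover have "inner_verts (P a) \<subseteq> (\<Union>a\<in>arcs H. inner_verts (P a))" using a(1) by blast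
      ultimately show ?thesis by (elim disjE) (blast, simp_all)
    qed
  next
    fix x assume "x \<in> \<phi> ` verts H \<union> (\<Union>a\<in>arcs H. inner_verts (P a))"
    moreover have "(\<Union>a\<in>arcs H. inner_verts (P a)) \<subseteq> (\<Union>a\<in>arcs H. set (P a))"
      by (rule UN_mono[OF subset_refl inner_sub])
    ultimately show "x \<in> \<phi> ` verts H \<union> (\<Union>a\<in>arcs H. set (P a))" by blast
  qed
qed

lemma verts_del[simp]: "verts (del_verts G Y) = verts G - Y"
  by (simp add: del_verts_def verts_def)

lemma arcs_del[simp]: "arcs (del_verts G Y) = arcs G \<inter> ((verts G - Y) \<times> (verts G - Y))"
  by (simp add: del_verts_def arcs_def)

lemma is_dpath_del:
  "is_dpath (del_verts G Y) p \<longleftrightarrow> is_dpath G p \<and> set p \<subseteq> verts G - Y"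
proof
  assume "is_dpath (del_verts G Y) p"
  then show "is_dpath G p \<and> set p \<subseteq> verts G - Y" unfolding is_dpath_def by auto
next
  assume a: "is_dpath G p \<and> set p \<subseteq> verts G - Y"
  have "(p ! i, p ! Suc i) \<in> arcs (del_verts G Y)" if "Suc i < length p" for i
  proof -
    have "p ! i \<in> set p" "p ! Suc i \<in> set p" using that by simp_all
    then show ?thesis using a that unfolding is_dpath_def arcs_del by (intro IntI SigmaI) blast+
  qed
  then show "is_dpath (del_verts G Y) p" using a unfolding is_dpath_def by auto
qed

lemma tm_model_D:
  assumes "tm_model G H \<phi> P"
  shows "inj_on \<phi> (verts H)" "\<phi> ` verts H \<subseteq> verts G"
  using assms unfolding tm_model_def by simp_all

lemma tm_model_arc:
  assumes "tm_model G H \<phi> P" "a \<in> arcs H"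
  shows "is_dpath G (P a)" "hd (P a) = \<phi> (fst a)" "last (P a) = \<phi> (snd a)"
    "inner_verts (P a) \<inter> \<phi> ` verts H = {}"
  using assms unfolding tm_model_def by simp_all

lemma tm_model_pair:
  assumes "tm_model G H \<phi> P" "a \<in> arcs H" "b \<in> arcs H" "a \<noteq> b"
  shows "inner_verts (P a) \<inter> inner_verts (P b) = {}" "path_arcs (P a) \<inter> path_arcs (P b) = {}"
  using assms unfolding tm_model_def by simp_all

lemma tm_modelI:
  assumes "inj_on \<phi> (verts H)" "\<phi> ` verts H \<subseteq> verts G"
    "\<And>a. a \<in> arcs H \<Longrightarrow> is_dpath G (P a) \<and> hd (P a) = \<phi> (fst a) \<and> last (P a) = \<phi> (snd a)
         \<and> inner_verts (P a) \<inter> \<phi> ` verts H = {}"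
    "\<And>a b. a \<in> arcs H \<Longrightarrow> b \<in> arcs H \<Longrightarrow> a \<noteq> b \<Longrightarrow>
         inner_verts (P a) \<inter> inner_verts (P b) = {} \<and> path_arcs (P a) \<inter> path_arcs (P b) = {}"
  shows "tm_model G H \<phi> P"
  using assms unfolding tm_model_def by simp

lemma tm_verts_phi: "\<phi> ` verts H \<subseteq> tm_verts H \<phi> P"
  unfolding tm_verts_def by blast

lemma tm_verts_path: "a \<in> arcs H \<Longrightarrow> set (P a) \<subseteq> tm_verts H \<phi> P"
  unfolding tm_verts_def by blast

lemma tm_model_transfer:
  assumes m: "tm_model G1 H \<phi> P" "\<phi> ` verts H \<subseteq> verts G2" "\<And>a. a \<in> arcs H \<Longrightarrow> is_dpath G2 (P a)"
  shows "tm_model G2 H \<phi> P"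
  using tm_model_D[OF m(1)] tm_model_arc[OF m(1)] tm_model_pair[OF m(1)] m(2,3)
  by (intro tm_modelI) simp_all

lemma tm_model_del:
  "tm_model (del_verts G Y) H \<phi> P \<longleftrightarrow> tm_model G H \<phi> P \<and> tm_verts H \<phi> P \<subseteq> verts G - Y"
proof
  assume a: "tm_model (del_verts G Y) H \<phi> P"
  have "tm_verts H \<phi> P \<subseteq> verts G - Y" using tm_verts_sub[OF a] by simp
  moreover have "tm_model G H \<phi> P"
  proof (rule tm_model_transfer[OF a])
    show "\<phi> ` verts H \<subseteq> verts G" using tm_model_D(2)[OF a] by auto
    fix x assume "x \<in> arcs H"
    then have "is_dpath (del_verts G Y) (P x)" using tm_model_arc(1)[OF a] by blast
    then show "is_dpath G (P x)" unfolding is_dpath_del by blast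
  qed
  ultimately show "tm_model G H \<phi> P \<and> tm_verts H \<phi> P \<subseteq> verts G - Y" by blast
next
  assume a: "tm_model G H \<phi> P \<and> tm_verts H \<phi> P \<subseteq> verts G - Y"
  then have m: "tm_model G H \<phi> P" and sub: "tm_verts H \<phi> P \<subseteq> verts G - Y" by auto
  show "tm_model (del_verts G Y) H \<phi> P"
  proof (rule tm_model_transfer[OF m])
    show "\<phi> ` verts H \<subseteq> verts (del_verts G Y)" using sub tm_verts_phi[of \<phi> H P] by simp
    fix x assume x: "x \<in> arcs H"
    then have "set (P x) \<subseteq> verts G - Y" using sub tm_verts_path[OF x, of P \<phi>] by blast
    moreover have "is_dpath G (P x)" using tm_model_arc(1)[OF m x] .
    ultimately show "is_dpath (del_verts G Y) (P x)" unfolding is_dpath_del by blast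
  qed
qed

lemma tournament_del:
  assumes t: "tournament T" shows "tournament (del_verts T Y)"
proof -
  have s: "finite (verts T)" "\<forall>v. (v, v) \<notin> arcs T"
    and t': "\<forall>u\<in>verts T. \<forall>v\<in>verts T. u \<noteq> v \<longrightarrow> ((u, v) \<in> arcs T \<longleftrightarrow> (v, u) \<notin> arcs T)"
    using t unfolding tournament_def simple_digraph_def by blast+
  have tt: "((u, v) \<in> arcs T \<longleftrightarrow> (v, u) \<notin> arcs T)" if "u\<in>verts T" "v\<in>verts T" "u \<noteq> v" for u v
    using bspec[OF bspec[OF t' that(1)] that(2)] that(3) by (rule mp)
  show ?thesis unfolding tournament_def simple_digraph_def verts_del arcs_del
  proof (intro conjI ballI impI allI)
    show "finite (verts T - Y)" using s(1) by simp
    show "arcs T \<inter> (verts T - Y) \<times> (verts T - Y) \<subseteq> (verts T - Y) \<times> (verts T - Y)" by (rule Int_lower2)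
    fix v show "(v, v) \<notin> arcs T \<inter> (verts T - Y) \<times> (verts T - Y)" using s(2) by simp
  next
    fix u v assume uv: "u \<in> verts T - Y" "v \<in> verts T - Y" "u \<noteq> v"
    then show "((u, v) \<in> arcs T \<inter> (verts T - Y) \<times> (verts T - Y)) =
               ((v, u) \<notin> arcs T \<inter> (verts T - Y) \<times> (verts T - Y))"
      using tt[of u v] by simp
  qed
qed



definition cp :: "'a digraph \<Rightarrow> 'b digraph \<Rightarrow> 'a set \<Rightarrow> nat \<Rightarrow> bool" where
 "cp T H S k \<longleftrightarrow> (\<exists>\<phi> P. (\<forall>i<k. tm_model T H (\<phi> i) (P i) \<and> tm_verts H (\<phi> i) (P i) \<subseteq> S) \<and>
        (\<forall>i<k. \<forall>j<k. i \<noteq> j \<longrightarrow> tm_verts H (\<phi> i) (P i) \<inter> tm_verts H (\<phi> j) (P j) = {}))"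

lemma cpD:
  assumes "cp T H S k"
  obtains \<phi> P where "\<forall>i<k. tm_model T H (\<phi> i) (P i) \<and> tm_verts H (\<phi> i) (P i) \<subseteq> S"
    "\<forall>i<k. \<forall>j<k. i \<noteq> j \<longrightarrow> tm_verts H (\<phi> i) (P i) \<inter> tm_verts H (\<phi> j) (P j) = {}"
  using assms unfolding cp_def by blast

lemma cp_del:
  assumes "S \<subseteq> verts T"
  shows "contains_k_disjoint_tm k (del_verts T (verts T - S)) H \<longleftrightarrow> cp T H S k"
proof -
  have e: "verts T - (verts T - S) = S" using assms by blast
  have "contains_k_disjoint_tm k (del_verts T (verts T - S)) H = cp T H (verts T - (verts T - S)) k"
    unfolding contains_k_disjoint_tm_def cp_def tm_model_del by (rule refl)
  then show ?thesis using e by simp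
qed

lemma cp_top: "contains_k_disjoint_tm k T H \<longleftrightarrow> cp T H (verts T) k"
proof
  assume "contains_k_disjoint_tm k T H"
  then obtain \<phi> P where 1: "\<forall>i<k. tm_model T H (\<phi> i) (P i)"
    and 2: "\<forall>i<k. \<forall>j<k. i \<noteq> j \<longrightarrow> tm_verts H (\<phi> i) (P i) \<inter> tm_verts H (\<phi> j) (P j) = {}"
    unfolding contains_k_disjoint_tm_def by blast
  have "\<forall>i<k. tm_model T H (\<phi> i) (P i) \<and> tm_verts H (\<phi> i) (P i) \<subseteq> verts T"
    using 1 tm_verts_sub by (simp add: tm_verts_sub)
  then show "cp T H (verts T) k" unfolding cp_def using 2 by (intro exI[of _ \<phi>] exI[of _ P] conjI) simp_all
next
  assume "cp T H (verts T) k"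
  then obtain \<phi> P where 1: "\<forall>i<k. tm_model T H (\<phi> i) (P i) \<and> tm_verts H (\<phi> i) (P i) \<subseteq> verts T"
    and 2: "\<forall>i<k. \<forall>j<k. i \<noteq> j \<longrightarrow> tm_verts H (\<phi> i) (P i) \<inter> tm_verts H (\<phi> j) (P j) = {}"
    unfolding cp_def by blast
  show "contains_k_disjoint_tm k T H" unfolding contains_k_disjoint_tm_def
    using 1 2 by (intro exI[of _ \<phi>] exI[of _ P] conjI) simp_all
qed

lemma cp_one: "cp T H S 1 \<longleftrightarrow> (\<exists>\<phi> P. tm_model T H \<phi> P \<and> tm_verts H \<phi> P \<subseteq> S)"
proof
  assume "cp T H S 1"
  then obtain \<phi> P where 1: "\<forall>i<(1::nat). tm_model T H (\<phi> i) (P i) \<and> tm_verts H (\<phi> i) (P i) \<subseteq> S"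
    and "\<forall>i<(1::nat). \<forall>j<(1::nat). i \<noteq> j \<longrightarrow> tm_verts H (\<phi> i) (P i) \<inter> tm_verts H (\<phi> j) (P j) = {}"
    by (rule cpD)
  from 1 show "\<exists>\<phi> P. tm_model T H \<phi> P \<and> tm_verts H \<phi> P \<subseteq> S"
    by (intro exI[of _ "\<phi> 0"] exI[of _ "P 0"]) simp
next
  assume "\<exists>\<phi> P. tm_model T H \<phi> P \<and> tm_verts H \<phi> P \<subseteq> S"
  then obtain \<phi> P where "tm_model T H \<phi> P \<and> tm_verts H \<phi> P \<subseteq> S" by blast
  then show "cp T H S 1" unfolding cp_def
    by (intro exI[of _ "\<lambda>_. \<phi>"] exI[of _ "\<lambda>_. P"]) simp
qed

lemma cp_mono:
  assumes "cp T H S k" "S \<subseteq> S'" "k' \<le> k"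
  shows "cp T H S' k'"
proof -
  obtain \<phi> P where 1: "\<forall>i<k. tm_model T H (\<phi> i) (P i) \<and> tm_verts H (\<phi> i) (P i) \<subseteq> S"
    and 2: "\<forall>i<k. \<forall>j<k. i \<noteq> j \<longrightarrow> tm_verts H (\<phi> i) (P i) \<inter> tm_verts H (\<phi> j) (P j) = {}"
    using assms(1) by (rule cpD)
  have 3: "\<forall>i<k'. tm_model T H (\<phi> i) (P i) \<and> tm_verts H (\<phi> i) (P i) \<subseteq> S'"
  proof (intro allI impI)
    fix i assume "i < k'" then have "i < k" using assms(3) by simp
    then show "tm_model T H (\<phi> i) (P i) \<and> tm_verts H (\<phi> i) (P i) \<subseteq> S'" using 1 assms(2) by blast
  qed
  have 4: "\<forall>i<k'. \<forall>j<k'. i \<noteq> j \<longrightarrow> tm_verts H (\<phi> i) (P i) \<inter> tm_verts H (\<phi> j) (P j) = {}"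
  proof (intro allI impI)
    fix i j assume "i < k'" "j < k'" "i \<noteq> j" then have "i < k" "j < k" using assms(3) by simp_all
    then show "tm_verts H (\<phi> i) (P i) \<inter> tm_verts H (\<phi> j) (P j) = {}" using 2 \<open>i \<noteq> j\<close> by blast
  qed
  show ?thesis unfolding cp_def using 3 4 by (intro exI[of _ \<phi>] exI[of _ P] conjI)
qed

lemma cp_empty:
  assumes "verts H \<noteq> {}" "k \<ge> 1"
  shows "\<not> cp T H {} k"
proof
  assume "cp T H {} k"
  then obtain \<phi> P where "\<forall>i<k. tm_model T H (\<phi> i) (P i) \<and> tm_verts H (\<phi> i) (P i) \<subseteq> {}"
    and "\<forall>i<k. \<forall>j<k. i \<noteq> j \<longrightarrow> tm_verts H (\<phi> i) (P i) \<inter> tm_verts H (\<phi> j) (P j) = {}"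
    by (rule cpD)
  then have "tm_verts H (\<phi> 0) (P 0) \<subseteq> {}" using assms(2) by simp
  then show False using tm_verts_phi[of "\<phi> 0" H "P 0"] assms(1) by blast
qed

lemma cp_union:
  assumes "cp T H A a" "cp T H C b" "A \<inter> C = {}"
  shows "cp T H (A \<union> C) (a + b)"
proof -
  obtain \<phi>1 P1 where 11: "\<forall>i<a. tm_model T H (\<phi>1 i) (P1 i) \<and> tm_verts H (\<phi>1 i) (P1 i) \<subseteq> A"
    and 12: "\<forall>i<a. \<forall>j<a. i \<noteq> j \<longrightarrow> tm_verts H (\<phi>1 i) (P1 i) \<inter> tm_verts H (\<phi>1 j) (P1 j) = {}"
    using assms(1) by (rule cpD)
  obtain \<phi>2 P2 where 21: "\<forall>i<b. tm_model T H (\<phi>2 i) (P2 i) \<and> tm_verts H (\<phi>2 i) (P2 i) \<subseteq> C"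
    and 22: "\<forall>i<b. \<forall>j<b. i \<noteq> j \<longrightarrow> tm_verts H (\<phi>2 i) (P2 i) \<inter> tm_verts H (\<phi>2 j) (P2 j) = {}"
    using assms(2) by (rule cpD)
  define \<phi> where "\<phi> i = (if i < a then \<phi>1 i else \<phi>2 (i - a))" for i
  define P where "P i = (if i < a then P1 i else P2 (i - a))" for i
  have m: "tm_model T H (\<phi> i) (P i) \<and> tm_verts H (\<phi> i) (P i) \<subseteq> A \<union> C" if "i < a + b" for i
  proof (cases "i < a")
    case True then show ?thesis using 11 by (simp add: \<phi>_def P_def) blast
  next
    case False then have "i - a < b" using that by simp
    then show ?thesis using 21 False by (simp add: \<phi>_def P_def) blast
  qed
  have d: "tm_verts H (\<phi> i) (P i) \<inter> tm_verts H (\<phi> j) (P j) = {}"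
    if "i < a + b" "j < a + b" "i \<noteq> j" for i j
  proof -
    consider "i < a" "j < a" | "i < a" "\<not> j < a" | "\<not> i < a" "j < a" | "\<not> i < a" "\<not> j < a" by blast
    then show ?thesis
    proof cases
      case 1 then show ?thesis using 12 that by (simp add: \<phi>_def P_def)
    next
      case 2
      have "tm_verts H (\<phi> i) (P i) \<subseteq> A" using 11 2 by (simp add: \<phi>_def P_def)
      moreover have "tm_verts H (\<phi> j) (P j) \<subseteq> C" using 21 2 that by (simp add: \<phi>_def P_def)
      ultimately show ?thesis using assms(3) by blast
    next
      case 3
      have "tm_verts H (\<phi> j) (P j) \<subseteq> A" using 11 3 by (simp add: \<phi>_def P_def)
      moreover have "tm_verts H (\<phi> i) (P i) \<subseteq> C" using 21 3 that by (simp add: \<phi>_def P_def)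
      ultimately show ?thesis using assms(3) by blast
    next
      case 4
      have "i - a < b" "j - a < b" "i - a \<noteq> j - a" using 4 that by auto
      then show ?thesis using 22 4 by (simp add: \<phi>_def P_def)
    qed
  qed
  show ?thesis unfolding cp_def using m d by (intro exI[of _ \<phi>] exI[of _ P] conjI) simp_all
qed

lemma path_stays:
  assumes "\<forall>n. Suc n < length p \<longrightarrow> (p ! n, p ! Suc n) \<in> arcs T"
    and "set p \<subseteq> A \<union> C" and "\<forall>x\<in>C. \<forall>y\<in>A. (x, y) \<notin> arcs T"
    and "p ! i \<in> C" and "i \<le> j" and "j < length p"
  shows "p ! j \<in> C"
  using assms(5,6)
proof (induction j)
  case 0 then show ?case using assms(4) by simp
next
  case (Suc j)
  show ?case
  proof (cases "i = Suc j")
    case True then show ?thesis using assms(4) by simp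
  next
    case False
    then have "i \<le> j" using Suc.prems by simp
    then have c: "p ! j \<in> C" using Suc by simp
    have arc: "(p ! j, p ! Suc j) \<in> arcs T" using assms(1) Suc.prems by blast
    have "p ! Suc j \<in> set p" using Suc.prems by simp
    then have "p ! Suc j \<in> A \<union> C" using assms(2) by blast
    then show ?thesis using c arc assms(3) by blast
  qed
qed

lemma dpath_stays:
  assumes "is_dpath T p" "set p \<subseteq> A \<union> C" "\<forall>x\<in>C. \<forall>y\<in>A. (x, y) \<notin> arcs T"
  shows "hd p \<in> C \<Longrightarrow> set p \<subseteq> C" and "last p \<notin> C \<Longrightarrow> set p \<inter> C = {}"
proof -
  have ar: "\<forall>n. Suc n < length p \<longrightarrow> (p ! n, p ! Suc n) \<in> arcs T" and ne: "p \<noteq> []"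
    using assms(1) unfolding is_dpath_def by auto
  show "set p \<subseteq> C" if "hd p \<in> C"
  proof
    fix x assume "x \<in> set p"
    then obtain j where j: "j < length p" "x = p ! j" by (auto simp: in_set_conv_nth)
    have "p ! 0 \<in> C" using that ne by (simp add: hd_conv_nth)
    from path_stays[OF ar assms(2,3) this _ j(1)] j show "x \<in> C" by simp
  qed
  show "set p \<inter> C = {}" if "last p \<notin> C"
  proof (rule ccontr)
    assume "set p \<inter> C \<noteq> {}"
    then obtain x where "x \<in> set p" "x \<in> C" by blast
    then obtain j where j: "j < length p" "p ! j \<in> C" by (auto simp: in_set_conv_nth)
    have "p ! (length p - 1) \<in> C" using path_stays[OF ar assms(2,3) j(2)] j(1) by simp
    then show False using that ne by (simp add: last_conv_nth)
  qed
qed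

lemma tm_split:
  assumes m: "tm_model T H \<phi> P" and sH: "simple_digraph H" and sc: "strongly_connected H"
    and W: "tm_verts H \<phi> P \<subseteq> A \<union> C" and noarc: "\<forall>x\<in>C. \<forall>y\<in>A. (x, y) \<notin> arcs T"
  shows "tm_verts H \<phi> P \<subseteq> A \<or> tm_verts H \<phi> P \<subseteq> C"
proof -
  have ends: "fst a \<in> verts H" "snd a \<in> verts H" if "a \<in> arcs H" for a
    using that sH unfolding simple_digraph_def by auto
  have setW: "set (P a) \<subseteq> A \<union> C" if "a \<in> arcs H" for a
    using tm_verts_path[OF that, of P \<phi>] W by blast
  have phiW: "\<phi> v \<in> A \<union> C" if "v \<in> verts H" for v
    using tm_verts_phi[of \<phi> H P] W that by blast
  show ?thesis
  proof (cases "\<exists>u\<in>verts H. \<phi> u \<in> C")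
    case True
    then obtain u where u: "u \<in> verts H" "\<phi> u \<in> C" by blast
    have pathC: "set (P a) \<subseteq> C" if "a \<in> arcs H" "\<phi> (fst a) \<in> C" for a
      using dpath_stays(1)[OF tm_model_arc(1)[OF m that(1)] setW[OF that(1)] noarc]
        tm_model_arc(2)[OF m that(1)] that(2) by simp
    have allC: "\<phi> v \<in> C" if "v \<in> verts H" for v
    proof -
      have "(u, v) \<in> (arcs H)\<^sup>*" using sc u(1) that unfolding strongly_connected_def by blast
      then show ?thesis
      proof (induction rule: rtrancl_induct)
        case base show ?case using u by simp
      next
        case (step y z)
        have "set (P (y, z)) \<subseteq> C" using pathC[of "(y, z)"] step by simp
        moreover have "last (P (y, z)) = \<phi> z" using tm_model_arc(3)[OF m step(2)] by simp
        moreover have "P (y, z) \<noteq> []" using tm_model_arc(1)[OF m step(2)] unfolding is_dpath_def by auto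
        ultimately show ?case using last_in_set by fastforce
      qed
    qed
    have "set (P a) \<subseteq> C" if "a \<in> arcs H" for a using pathC[OF that] allC ends[OF that] by blast
    then have "tm_verts H \<phi> P \<subseteq> C" using allC unfolding tm_verts_def by blast
    then show ?thesis by blast
  next
    case False
    then have allA: "\<phi> v \<in> A" if "v \<in> verts H" for v using phiW[OF that] that by blast
    have "set (P a) \<subseteq> A" if "a \<in> arcs H" for a
    proof -
      have "last (P a) \<notin> C" using tm_model_arc(3)[OF m that] False ends[OF that] by auto
      then have "set (P a) \<inter> C = {}"
        using dpath_stays(2)[OF tm_model_arc(1)[OF m that] setW[OF that] noarc] by blast
      then show ?thesis using setW[OF that] by blast
    qed
    then have "tm_verts H \<phi> P \<subseteq> A" using allA unfolding tm_verts_def by blast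
    then show ?thesis by blast
  qed
qed

lemma arith_klogk:
  fixes k :: nat assumes "k \<ge> 2"
  shows "2 * real (k div 2) * log 2 (real (k div 2)) + real k
         + 2 * real (k - k div 2) * log 2 (real (k - k div 2)) \<le> 2 * real k * log 2 (real k)"
proof (cases "even k")
  case True
  then obtain m where k: "k = 2 * m" by blast
  then have m1: "m \<ge> 1" using assms by simp
  have "log 2 (real k) = 1 + log 2 (real m)" using m1 k by (simp add: log_mult)
  then show ?thesis using k by (simp add: algebra_simps)
next
  case False
  then obtain m where k: "k = 2 * m + 1" using oddE by blast
  then have m1: "m \<ge> 1" using assms by simp
  have kd: "k div 2 = m" "k - k div 2 = m + 1" using k by auto
  have l1: "log 2 (real m) \<le> log 2 (real m + 1)" using m1 by simp
  have "2 * (real m + 1)^2 \<le> (2 * real m + 1)^2"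
  proof -
    have "(1::real) \<le> real m" using m1 by simp
    then have "1 \<le> real m ^ 2" by (rule one_le_power)
    then have "1 \<le> 2 * real m ^ 2" by simp
    then show ?thesis by (simp add: power2_eq_square algebra_simps)
  qed
  then have "log 2 (2 * (real m + 1)^2) \<le> log 2 ((2 * real m + 1)^2)"
    using m1 by simp
  then have l2: "1 + 2 * log 2 (real m + 1) \<le> 2 * log 2 (2 * real m + 1)"
    using m1 by (simp add: log_mult log_nat_power)
  have lm0: "0 \<le> log 2 (real m)" using m1 by simp
  have "2 * real m * log 2 (real m) \<le> 2 * real m * log 2 (real m + 1)"
    using l1 by (intro mult_left_mono) auto
  moreover have "real k * (1 + 2 * log 2 (real m + 1)) \<le> real k * (2 * log 2 (2 * real m + 1))"
    using l2 by (intro mult_left_mono) auto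
  ultimately show ?thesis using k kd by (simp add: algebra_simps)
qed



lemma inner_map: "inner_verts (map h p) = h ` inner_verts p"
  unfolding inner_verts_def by (simp add: map_tl[symmetric] map_butlast[symmetric])

lemma path_arcs_img: "path_arcs q = (\<lambda>i. (q ! i, q ! Suc i)) ` {i. Suc i < length q}"
  unfolding path_arcs_def by blast

lemma path_arcs_map: "path_arcs (map h p) = map_prod h h ` path_arcs p"
  unfolding path_arcs_img by (simp add: image_image)

lemma dpath_map:
  assumes p: "is_dpath G' p" and inj: "inj_on h (verts G')" and img: "h ` verts G' \<subseteq> verts G"
    and arc: "\<And>x y. (x, y) \<in> arcs G' \<Longrightarrow> (h x, h y) \<in> arcs G"
  shows "is_dpath G (map h p)"
proof -
  have l: "length p \<ge> 2" and d: "distinct p" and s: "set p \<subseteq> verts G'"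
    and a: "\<forall>i. Suc i < length p \<longrightarrow> (p ! i, p ! Suc i) \<in> arcs G'"
    using p unfolding is_dpath_def by auto
  have "distinct (map h p)" using d inj_on_subset[OF inj s] by (simp add: distinct_map)
  moreover have "set (map h p) \<subseteq> verts G" using s img by auto
  moreover have "\<forall>i. Suc i < length (map h p) \<longrightarrow> (map h p ! i, map h p ! Suc i) \<in> arcs G"
    using a arc by simp
  ultimately show ?thesis using l unfolding is_dpath_def by simp
qed

lemma tm_map:
  assumes m: "tm_model G' H \<phi> P" and inj: "inj_on h (verts G')" and img: "h ` verts G' \<subseteq> verts G"
    and arc: "\<And>x y. (x, y) \<in> arcs G' \<Longrightarrow> (h x, h y) \<in> arcs G"
  shows "tm_model G H (h \<circ> \<phi>) (\<lambda>a. map h (P a))"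
    and "tm_verts H (h \<circ> \<phi>) (\<lambda>a. map h (P a)) = h ` tm_verts H \<phi> P"
proof -
  have phiV: "\<phi> ` verts H \<subseteq> verts G'" using tm_model_D(2)[OF m] .
  have setV: "set (P a) \<subseteq> verts G'" if "a \<in> arcs H" for a
    using tm_model_arc(1)[OF m that] unfolding is_dpath_def by auto
  have innV: "inner_verts (P a) \<subseteq> verts G'" if "a \<in> arcs H" for a
    by (rule order_trans[OF inner_sub setV[OF that]])
  have ne: "P a \<noteq> []" if "a \<in> arcs H" for a
    using tm_model_arc(1)[OF m that] unfolding is_dpath_def by auto
  show "tm_model G H (h \<circ> \<phi>) (\<lambda>a. map h (P a))"
  proof (rule tm_modelI)
    show "inj_on (h \<circ> \<phi>) (verts H)"
      using tm_model_D(1)[OF m] inj_on_subset[OF inj phiV] by (rule comp_inj_on)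
    show "(h \<circ> \<phi>) ` verts H \<subseteq> verts G" using phiV img by (auto simp: image_comp[symmetric])
  next
    fix a assume a: "a \<in> arcs H"
    have "is_dpath G (map h (P a))" using dpath_map[OF tm_model_arc(1)[OF m a] inj img arc] .
    moreover have "hd (map h (P a)) = (h \<circ> \<phi>) (fst a)"
      using tm_model_arc(2)[OF m a] ne[OF a] by (simp add: hd_map)
    moreover have "last (map h (P a)) = (h \<circ> \<phi>) (snd a)"
      using tm_model_arc(3)[OF m a] ne[OF a] by (simp add: last_map)
    moreover have "inner_verts (map h (P a)) \<inter> (h \<circ> \<phi>) ` verts H = {}"
    proof -
      have "inner_verts (map h (P a)) \<inter> (h \<circ> \<phi>) ` verts H = h ` (inner_verts (P a) \<inter> \<phi> ` verts H)"
        unfolding inner_map image_comp[symmetric]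
        by (rule inj_on_image_Int[OF inj innV[OF a] phiV, symmetric])
      then show ?thesis using tm_model_arc(4)[OF m a] by simp
    qed
    ultimately show "is_dpath G (map h (P a)) \<and> hd (map h (P a)) = (h \<circ> \<phi>) (fst a) \<and>
         last (map h (P a)) = (h \<circ> \<phi>) (snd a) \<and> inner_verts (map h (P a)) \<inter> (h \<circ> \<phi>) ` verts H = {}"
      by blast
  next
    fix a b assume ab: "a \<in> arcs H" "b \<in> arcs H" "a \<noteq> b"
    have "inner_verts (map h (P a)) \<inter> inner_verts (map h (P b)) = h ` (inner_verts (P a) \<inter> inner_verts (P b))"
      unfolding inner_map by (rule inj_on_image_Int[OF inj innV[OF ab(1)] innV[OF ab(2)], symmetric])
    then have 1: "inner_verts (map h (P a)) \<inter> inner_verts (map h (P b)) = {}"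
      using tm_model_pair(1)[OF m ab] by simp
    have injp: "inj_on (map_prod h h) (verts G' \<times> verts G')" using map_prod_inj_on[OF inj inj] .
    have pa: "path_arcs (P c) \<subseteq> verts G' \<times> verts G'" if "c \<in> arcs H" for c
      by (rule order_trans[OF path_arcs_sub Sigma_mono[OF setV[OF that] setV[OF that]]])
    have "path_arcs (map h (P a)) \<inter> path_arcs (map h (P b)) = map_prod h h ` (path_arcs (P a) \<inter> path_arcs (P b))"
      unfolding path_arcs_map by (rule inj_on_image_Int[OF injp pa[OF ab(1)] pa[OF ab(2)], symmetric])
    then have 2: "path_arcs (map h (P a)) \<inter> path_arcs (map h (P b)) = {}"
      using tm_model_pair(2)[OF m ab] by simp
    show "inner_verts (map h (P a)) \<inter> inner_verts (map h (P b)) = {} \<and>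
          path_arcs (map h (P a)) \<inter> path_arcs (map h (P b)) = {}" using 1 2 by blast
  qed
  show "tm_verts H (h \<circ> \<phi>) (\<lambda>a. map h (P a)) = h ` tm_verts H \<phi> P"
    unfolding tm_verts_def by (simp add: image_Un image_UN image_comp)
qed



lemma split_copies:
  fixes G' :: "nat digraph" and H :: "'b digraph" and g :: "'b \<Rightarrow> nat" and Hj :: "nat digraph"
  assumes m: "tm_model G' Hj \<phi>' P'" and sH: "simple_digraph H"
    and ginj: "inj_on g (verts H)"
    and vHj0: "verts Hj = (\<lambda>(i, v). prod_encode (i, g v)) ` ({..<j} \<times> verts H)"
    and aHj0: "arcs Hj = (\<lambda>(i, a). (prod_encode (i, g (fst a)), prod_encode (i, g (snd a)))) ` ({..<j} \<times> arcs H)"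
  shows "contains_k_disjoint_tm j G' H"
proof -
  define e where "e i v = prod_encode (i, g v)" for i v
  define E where "E i a = (e i (fst a), e i (snd a))" for i a
  have AV: "arcs H \<subseteq> verts H \<times> verts H" using sH by (simp add: simple_digraph_def)
  have vHj: "verts Hj = (\<lambda>(i, v). e i v) ` ({..<j} \<times> verts H)" using vHj0 by (simp add: e_def)
  have aHj: "arcs Hj = (\<lambda>(i, a). E i a) ` ({..<j} \<times> arcs H)" using aHj0 by (simp add: E_def e_def)
  have eV: "e i v \<in> verts Hj" if "i < j" "v \<in> verts H" for i v
    unfolding vHj by (rule image_eqI[where x="(i, v)"]) (use that in auto)
  have eA: "E i a \<in> arcs Hj" if "i < j" "a \<in> arcs H" for i a
    unfolding aHj by (rule image_eqI[where x="(i, a)"]) (use that in auto)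
  have e_eq: "i = i' \<and> v = v'" if "v \<in> verts H" "v' \<in> verts H" "e i v = e i' v'" for i i' v v'
  proof -
    have "i = i'" "g v = g v'" using that(3) by (simp_all add: e_def prod_encode_eq)
    then show ?thesis using inj_onD[OF ginj _ that(1,2)] by blast
  qed
  have E_eq: "i = i' \<and> a = b" if "a \<in> arcs H" "b \<in> arcs H" "E i a = E i' b" for i i' a b
  proof -
    have 1: "e i (fst a) = e i' (fst b)" "e i (snd a) = e i' (snd b)" using that(3) by (simp_all add: E_def)
    have "fst a \<in> verts H" "snd a \<in> verts H" "fst b \<in> verts H" "snd b \<in> verts H"
      using AV that(1,2) by auto
    then have "i = i'" "fst a = fst b" "snd a = snd b" using e_eq 1 by blast+
    then show ?thesis by (simp add: prod_eq_iff)
  qed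
  have injphi: "inj_on \<phi>' (verts Hj)" using tm_model_D(1)[OF m] .
  have phiG: "\<phi>' ` verts Hj \<subseteq> verts G'" using tm_model_D(2)[OF m] .
  define \<phi> where "\<phi> i = \<phi>' \<circ> e i" for i
  define P where "P i a = P' (E i a)" for i a
  have eVs: "e i ` verts H \<subseteq> verts Hj" if "i < j" for i using eV[OF that] by blast
  have models: "tm_model G' H (\<phi> i) (P i)" if i: "i < j" for i
  proof (rule tm_modelI)
    have "inj_on (e i) (verts H)" by (rule inj_onI) (use e_eq in blast)
    then show "inj_on (\<phi> i) (verts H)" unfolding \<phi>_def
      using inj_on_subset[OF injphi eVs[OF i]] by (rule comp_inj_on)
    have "\<phi> i ` verts H \<subseteq> \<phi>' ` verts Hj" unfolding \<phi>_def image_comp[symmetric] using eVs[OF i] by blast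
    then show "\<phi> i ` verts H \<subseteq> verts G'" using phiG by blast
  next
    fix a assume a: "a \<in> arcs H"
    have ea: "E i a \<in> arcs Hj" using eA[OF i a] .
    have sub: "\<phi> i ` verts H \<subseteq> \<phi>' ` verts Hj" unfolding \<phi>_def image_comp[symmetric] using eVs[OF i] by blast
    have "inner_verts (P i a) \<inter> \<phi> i ` verts H = {}"
      using tm_model_arc(4)[OF m ea] sub unfolding P_def by blast
    then show "is_dpath G' (P i a) \<and> hd (P i a) = \<phi> i (fst a) \<and> last (P i a) = \<phi> i (snd a)
         \<and> inner_verts (P i a) \<inter> \<phi> i ` verts H = {}"
      using tm_model_arc(1-3)[OF m ea] unfolding P_def \<phi>_def by (simp add: E_def)
  next
    fix a b assume ab: "a \<in> arcs H" "b \<in> arcs H" "a \<noteq> b"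
    have "E i a \<noteq> E i b" using E_eq[OF ab(1,2)] ab(3) by blast
    then show "inner_verts (P i a) \<inter> inner_verts (P i b) = {} \<and> path_arcs (P i a) \<inter> path_arcs (P i b) = {}"
      using tm_model_pair[OF m eA[OF i ab(1)] eA[OF i ab(2)]] unfolding P_def by blast
  qed
  have disj: "tm_verts H (\<phi> i) (P i) \<inter> tm_verts H (\<phi> i') (P i') = {}"
    if ii: "i < j" "i' < j" "i \<noteq> i'" for i i'
  proof (rule ccontr)
    assume "tm_verts H (\<phi> i) (P i) \<inter> tm_verts H (\<phi> i') (P i') \<noteq> {}"
    then obtain x where x1: "x \<in> tm_verts H (\<phi> i) (P i)" and x2: "x \<in> tm_verts H (\<phi> i') (P i')" by blast
    have inn: "x \<notin> inner_verts (P' a')" if "a' \<in> arcs Hj" "x \<in> \<phi>' ` verts Hj" for a'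
      using tm_model_arc(4)[OF m that(1)] that(2) by blast
    have x1': "x \<in> \<phi> i ` verts H \<union> (\<Union>a\<in>arcs H. inner_verts (P i a))"
        using x1 tm_verts_inner[OF models[OF ii(1)] sH] by simp
      from x1' consider (v) v where "v \<in> verts H" "x = \<phi>' (e i v)" | (a) a where "a \<in> arcs H" "x \<in> inner_verts (P' (E i a))"
      unfolding \<phi>_def P_def by auto
    then show False
    proof cases
      case v
      have xv: "x \<in> \<phi>' ` verts Hj" using v eV[OF ii(1) v(1)] by blast
      have x2': "x \<in> \<phi> i' ` verts H \<union> (\<Union>a\<in>arcs H. inner_verts (P i' a))"
        using x2 tm_verts_inner[OF models[OF ii(2)] sH] by simp
      from x2' consider (v') v' where "v' \<in> verts H" "x = \<phi>' (e i' v')" | (a') b where "b \<in> arcs H" "x \<in> inner_verts (P' (E i' b))"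
        unfolding \<phi>_def P_def by auto
      then show False
      proof cases
        case v'
        have "e i v = e i' v'" using inj_onD[OF injphi _ eV[OF ii(1) v(1)] eV[OF ii(2) v'(1)]] v v' by simp
        then show False using e_eq[OF v(1) v'(1)] ii(3) by blast
      next
        case a'
        then show False using inn[OF eA[OF ii(2) a'(1)] xv] by blast
      qed
    next
      case a
      have x2': "x \<in> \<phi> i' ` verts H \<union> (\<Union>a\<in>arcs H. inner_verts (P i' a))"
        using x2 tm_verts_inner[OF models[OF ii(2)] sH] by simp
      from x2' consider (v') v' where "v' \<in> verts H" "x = \<phi>' (e i' v')" | (a') b where "b \<in> arcs H" "x \<in> inner_verts (P' (E i' b))"
        unfolding \<phi>_def P_def by auto
      then show False
      proof cases
        case v'
        have xv: "x \<in> \<phi>' ` verts Hj" using v' eV[OF ii(2) v'(1)] by blast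
        then show False using inn[OF eA[OF ii(1) a(1)] xv] a(2) by blast
      next
        case a'
        have "E i a \<noteq> E i' b" using E_eq[OF a(1) a'(1)] ii(3) by blast
        then have "inner_verts (P' (E i a)) \<inter> inner_verts (P' (E i' b)) = {}"
          using tm_model_pair(1)[OF m eA[OF ii(1) a(1)] eA[OF ii(2) a'(1)]] by blast
        then show False using a(2) a'(2) by blast
      qed
    qed
  qed
  show ?thesis unfolding contains_k_disjoint_tm_def
    using models disj by (intro exI[of _ \<phi>] exI[of _ P] conjI) simp_all
qed



lemma card_le_width:
  assumes "finite (verts G)"
  shows "card {v\<in>verts G. l v \<le> \<alpha> \<and> \<alpha> \<le> r v} \<le> decomp_width G l r"
  unfolding decomp_width_def
proof (rule Max_ge)
  have "range (\<lambda>\<alpha>. card {v \<in> verts G. l v \<le> \<alpha> \<and> \<alpha> \<le> r v}) \<subseteq> {..card (verts G)}"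
    using assms by (auto intro!: card_mono)
  then show "finite (range (\<lambda>\<alpha>. card {v \<in> verts G. l v \<le> \<alpha> \<and> \<alpha> \<le> r v}))"
    using finite_subset by blast
  show "card {v \<in> verts G. l v \<le> \<alpha> \<and> \<alpha> \<le> r v} \<in> range (\<lambda>\<alpha>. card {v \<in> verts G. l v \<le> \<alpha> \<and> \<alpha> \<le> r v})"
    by (rule rangeI)
qed

lemma pw_bound:
  fixes G :: "'a digraph" and H :: "'b digraph"
  assumes dpw: "dpw_constant d" and tG: "tournament G" and sH: "simple_digraph H"
    and nc: "\<not> contains_k_disjoint_tm j G H"
  shows "\<exists>l r. interval_decomp G l r \<and> real (decomp_width G l r) \<le> d * real j * real (gsize H)"
proof -
  have finG: "finite (verts G)" and AG: "arcs G \<subseteq> verts G \<times> verts G" and loopG: "\<forall>v. (v, v) \<notin> arcs G"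
    and ttG: "\<forall>u\<in>verts G. \<forall>v\<in>verts G. u \<noteq> v \<longrightarrow> ((u, v) \<in> arcs G \<longleftrightarrow> (v, u) \<notin> arcs G)"
    using tG unfolding tournament_def simple_digraph_def by blast+
  have finH: "finite (verts H)" and AH: "arcs H \<subseteq> verts H \<times> verts H" and loopH: "\<forall>v. (v, v) \<notin> arcs H"
    using sH unfolding simple_digraph_def by blast+
  have finAH: "finite (arcs H)" using finite_subset[OF AH] finH by blast
  obtain f :: "'a \<Rightarrow> nat" and n where "f ` verts G = {i. i < n}" and finj: "inj_on f (verts G)"
    using finite_imp_inj_to_nat_seg[OF finG] by blast
  obtain g :: "'b \<Rightarrow> nat" and n' where "g ` verts H = {i. i < n'}" and ginj: "inj_on g (verts H)"
    using finite_imp_inj_to_nat_seg[OF finH] by blast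
  define G' :: "nat digraph" where "G' = (f ` verts G, map_prod f f ` arcs G)"
  define ev where "ev = (\<lambda>(i, v). prod_encode (i, g v))"
  define ea where "ea = (\<lambda>(i, a). (prod_encode (i, g (fst a)), prod_encode (i, g (snd a))))"
  define Hj :: "nat digraph" where "Hj = (ev ` ({..<j} \<times> verts H), ea ` ({..<j} \<times> arcs H))"
  have vG': "verts G' = f ` verts G" and aG': "arcs G' = map_prod f f ` arcs G"
    by (simp_all add: G'_def verts_def arcs_def)
  have vHj: "verts Hj = ev ` ({..<j} \<times> verts H)" and aHj: "arcs Hj = ea ` ({..<j} \<times> arcs H)"
    by (simp_all add: Hj_def verts_def arcs_def)
  have arc_iff: "(f x, f y) \<in> arcs G' \<longleftrightarrow> (x, y) \<in> arcs G" if xy: "x \<in> verts G" "y \<in> verts G" for x y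
  proof
    assume "(f x, f y) \<in> arcs G'"
    then obtain a b where ab: "(a, b) \<in> arcs G" "f x = f a" "f y = f b" unfolding aG' by auto
    have "a \<in> verts G" "b \<in> verts G" using ab(1) AG by auto
    then have "a = x" "b = y" using inj_onD[OF finj] ab xy by metis+
    then show "(x, y) \<in> arcs G" using ab(1) by simp
  next
    assume "(x, y) \<in> arcs G" then show "(f x, f y) \<in> arcs G'" unfolding aG' by force
  qed
  have tG': "tournament G'" unfolding tournament_def simple_digraph_def
  proof (intro conjI ballI impI allI)
    show "finite (verts G')" unfolding vG' using finG by simp
    show "arcs G' \<subseteq> verts G' \<times> verts G'" unfolding vG' aG' using AG by auto
    fix v show "(v, v) \<notin> arcs G'"
    proof
      assume "(v, v) \<in> arcs G'"
      then obtain a b where ab: "(a, b) \<in> arcs G" "v = f a" "v = f b" unfolding aG' by auto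
      have "a \<in> verts G" "b \<in> verts G" using ab(1) AG by auto
      then have "a = b" using inj_onD[OF finj] ab by metis
      then show False using ab(1) loopG by simp
    qed
  next
    fix u v assume uv: "u \<in> verts G'" "v \<in> verts G'" "u \<noteq> v"
    then obtain x y where xy: "x \<in> verts G" "y \<in> verts G" "u = f x" "v = f y" unfolding vG' by auto
    then have "x \<noteq> y" using uv(3) by blast
    then have "((x, y) \<in> arcs G) = ((y, x) \<notin> arcs G)" using ttG xy(1,2) by blast
    then show "((u, v) \<in> arcs G') = ((v, u) \<notin> arcs G')"
      unfolding xy(3,4) using arc_iff[OF xy(1,2)] arc_iff[OF xy(2,1)] by blast
  qed
  have ev_inj: "inj_on ev ({..<j} \<times> verts H)"
  proof (rule inj_onI)
    fix p q assume p: "p \<in> {..<j} \<times> verts H" and q: "q \<in> {..<j} \<times> verts H" and e: "ev p = ev q"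
    obtain i v where pp: "p = (i, v)" by (cases p)
    obtain i' v' where qq: "q = (i', v')" by (cases q)
    have "i = i'" "g v = g v'" using e by (simp_all add: ev_def pp qq prod_encode_eq)
    moreover have "v = v'" using inj_onD[OF ginj \<open>g v = g v'\<close>] p q pp qq by auto
    ultimately show "p = q" using pp qq by simp
  qed
  have ea_inj: "inj_on ea ({..<j} \<times> arcs H)"
  proof (rule inj_onI)
    fix p q assume p: "p \<in> {..<j} \<times> arcs H" and q: "q \<in> {..<j} \<times> arcs H" and e: "ea p = ea q"
    obtain i a where pp: "p = (i, a)" by (cases p)
    obtain i' b where qq: "q = (i', b)" by (cases q)
    have "i = i'" "g (fst a) = g (fst b)" "g (snd a) = g (snd b)"
      using e by (simp_all add: ea_def pp qq prod_encode_eq)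
    moreover have "fst a \<in> verts H" "snd a \<in> verts H" "fst b \<in> verts H" "snd b \<in> verts H"
      using p q pp qq AH by auto
    ultimately have "i = i'" "fst a = fst b" "snd a = snd b" using inj_onD[OF ginj] by metis+
    then show "p = q" using pp qq by (simp add: prod_eq_iff)
  qed
  have sHj: "simple_digraph Hj" unfolding simple_digraph_def
  proof (intro conjI allI)
    show "finite (verts Hj)" unfolding vHj using finH by simp
    show "arcs Hj \<subseteq> verts Hj \<times> verts Hj"
    proof
      fix x assume "x \<in> arcs Hj"
      then obtain i a where ia: "i < j" "a \<in> arcs H" "x = ea (i, a)" unfolding aHj by auto
      have "fst a \<in> verts H" "snd a \<in> verts H" using ia(2) AH by auto
      then have "ev (i, fst a) \<in> verts Hj" "ev (i, snd a) \<in> verts Hj" unfolding vHj using ia(1) by auto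
      then show "x \<in> verts Hj \<times> verts Hj" using ia(3) by (simp add: ea_def ev_def)
    qed
    fix v show "(v, v) \<notin> arcs Hj"
    proof
      assume "(v, v) \<in> arcs Hj"
      then obtain i a where ia: "i < j" "a \<in> arcs H" "(v, v) = ea (i, a)" unfolding aHj by auto
      then have "prod_encode (i, g (fst a)) = prod_encode (i, g (snd a))" by (auto simp: ea_def)
      then have "g (fst a) = g (snd a)" by (simp add: prod_encode_eq)
      moreover have "fst a \<in> verts H" "snd a \<in> verts H" using ia(2) AH by auto
      ultimately have "fst a = snd a" using inj_onD[OF ginj] by metis
      then show False using ia(2) loopH by (metis prod.collapse)
    qed
  qed
  have gHj: "gsize Hj = j * gsize H"
  proof -
    have "card (verts Hj) = j * card (verts H)" unfolding vHj
      using card_image[OF ev_inj] by (simp add: card_cartesian_product)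
    moreover have "card (arcs Hj) = j * card (arcs H)" unfolding aHj
      using card_image[OF ea_inj] by (simp add: card_cartesian_product)
    ultimately show ?thesis unfolding gsize_def by (simp add: algebra_simps)
  qed
  have nct: "\<not> contains_tm G' Hj"
  proof
    assume "contains_tm G' Hj"
    then obtain \<phi>' P' where m: "tm_model G' Hj \<phi>' P'" unfolding contains_tm_def by blast
    have vHj0: "verts Hj = (\<lambda>(i, v). prod_encode (i, g v)) ` ({..<j} \<times> verts H)"
      using vHj by (simp add: ev_def)
    have aHj0: "arcs Hj = (\<lambda>(i, a). (prod_encode (i, g (fst a)), prod_encode (i, g (snd a)))) ` ({..<j} \<times> arcs H)"
      using aHj by (simp add: ea_def)
    have "contains_k_disjoint_tm j G' H" by (rule split_copies[OF m sH ginj vHj0 aHj0])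
    then obtain \<phi> P where m1: "\<forall>i<j. tm_model G' H (\<phi> i) (P i)"
      and m2: "\<forall>i<j. \<forall>i'<j. i \<noteq> i' \<longrightarrow> tm_verts H (\<phi> i) (P i) \<inter> tm_verts H (\<phi> i') (P i') = {}"
      unfolding contains_k_disjoint_tm_def by blast
    define h where "h = inv_into (verts G) f"
    have hinj: "inj_on h (verts G')" unfolding h_def vG' by (rule inj_on_inv_into) simp
    have himg: "h ` verts G' \<subseteq> verts G" unfolding h_def vG' by (auto intro: inv_into_into)
    have harc: "(h x, h y) \<in> arcs G" if "(x, y) \<in> arcs G'" for x y
    proof -
      from that have "(x, y) \<in> map_prod f f ` arcs G" by (simp only: aG')
      then obtain p where p: "(x, y) = map_prod f f p" "p \<in> arcs G" by (rule imageE)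
      obtain a b where pab: "p = (a, b)" by (cases p)
      have ab: "(a, b) \<in> arcs G" "x = f a" "y = f b" using p pab by auto
      have "a \<in> verts G" "b \<in> verts G" using ab(1) AG by auto
      then have "h x = a" "h y = b" unfolding h_def ab(2,3) using finj by (simp_all add: inv_into_f_f)
      then show ?thesis using ab(1) by simp
    qed
    have "contains_k_disjoint_tm j G H" unfolding contains_k_disjoint_tm_def
    proof (intro exI[of _ "\<lambda>i. h \<circ> \<phi> i"] exI[of _ "\<lambda>i a. map h (P i a)"] conjI allI impI)
      fix i assume "i < j"
      then show "tm_model G H (h \<circ> \<phi> i) (\<lambda>a. map h (P i a))"
        using tm_map(1)[OF _ hinj himg harc] m1 by blast
    next
      fix i i' assume ii: "i < j" "i' < j" "i \<noteq> i'"
      have e1: "tm_verts H (h \<circ> \<phi> i) (\<lambda>a. map h (P i a)) = h ` tm_verts H (\<phi> i) (P i)"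
        using tm_map(2)[OF _ hinj himg harc] m1 ii(1) by blast
      have e2: "tm_verts H (h \<circ> \<phi> i') (\<lambda>a. map h (P i' a)) = h ` tm_verts H (\<phi> i') (P i')"
        using tm_map(2)[OF _ hinj himg harc] m1 ii(2) by blast
      have s1: "tm_verts H (\<phi> i) (P i) \<subseteq> verts G'" using tm_verts_sub m1 ii(1) by blast
      have s2: "tm_verts H (\<phi> i') (P i') \<subseteq> verts G'" using tm_verts_sub m1 ii(2) by blast
      have "h ` tm_verts H (\<phi> i) (P i) \<inter> h ` tm_verts H (\<phi> i') (P i') = h ` (tm_verts H (\<phi> i) (P i) \<inter> tm_verts H (\<phi> i') (P i'))"
        by (rule inj_on_image_Int[OF hinj s1 s2, symmetric])
      then show "tm_verts H (h \<circ> \<phi> i) (\<lambda>a. map h (P i a)) \<inter> tm_verts H (h \<circ> \<phi> i') (\<lambda>a. map h (P i' a)) = {}"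
        using e1 e2 m2 ii by simp
    qed
    then show False using nc by blast
  qed
  have pw: "real (pathwidth G') \<le> d * real (gsize Hj)"
    using dpw tG' sHj nct unfolding dpw_constant_def by blast
  have ex: "\<exists>w l r. interval_decomp G' l r \<and> decomp_width G' l r = w"
    by (rule exI[of _ "decomp_width G' (\<lambda>_. 0) (\<lambda>_. 0)"], rule exI[of _ "\<lambda>_. 0"], rule exI[of _ "\<lambda>_. 0"])
       (simp add: interval_decomp_def)
  obtain l' r' where dec': "interval_decomp G' l' r'" and w': "decomp_width G' l' r' = pathwidth G'"
    using LeastI_ex[OF ex] unfolding pathwidth_def by blast
  define l where "l = l' \<circ> f"
  define r where "r = r' \<circ> f"
  have dec: "interval_decomp G l r" unfolding interval_decomp_def
  proof (intro conjI ballI impI)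
    fix v assume "v \<in> verts G"
    then have "f v \<in> verts G'" unfolding vG' by simp
    then show "l v \<le> r v" using dec' unfolding interval_decomp_def l_def r_def by simp
  next
    fix u v assume uv: "u \<in> verts G" "v \<in> verts G" "r u < l v"
    then have "f u \<in> verts G'" "f v \<in> verts G'" unfolding vG' by simp_all
    then have "(f u, f v) \<in> arcs G'" using dec' uv(3) unfolding interval_decomp_def l_def r_def by simp
    then show "(u, v) \<in> arcs G" using arc_iff[OF uv(1,2)] by blast
  qed
  have wd: "decomp_width G l r = decomp_width G' l' r'"
  proof -
    have "card {v \<in> verts G. l v \<le> \<alpha> \<and> \<alpha> \<le> r v} = card {v \<in> verts G'. l' v \<le> \<alpha> \<and> \<alpha> \<le> r' v}" for \<alpha>
    proof -
      have eq: "f ` {v \<in> verts G. l v \<le> \<alpha> \<and> \<alpha> \<le> r v} = {v \<in> verts G'. l' v \<le> \<alpha> \<and> \<alpha> \<le> r' v}"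
        unfolding vG' l_def r_def by auto
      have inj: "inj_on f {v \<in> verts G. l v \<le> \<alpha> \<and> \<alpha> \<le> r v}" by (rule inj_on_subset[OF finj]) simp
      show ?thesis using card_image[OF inj] eq by simp
    qed
    then show ?thesis unfolding decomp_width_def by simp
  qed
  have "real (decomp_width G l r) \<le> d * real j * real (gsize H)"
    using pw w' wd gHj by (simp add: algebra_simps)
  then show ?thesis using dec by blast
qed



lemma klogk_mono:
  assumes "1 \<le> a" "a \<le> (b::nat)"
  shows "real a * log 2 (real a) \<le> real b * log 2 (real b)"
proof -
  have "0 \<le> log 2 (real a)" using assms by simp
  moreover have "log 2 (real a) \<le> log 2 (real b)" using assms by simp
  ultimately show ?thesis using assms by (intro mult_mono) auto
qed

lemma main_rec:
  fixes T :: "'a digraph" and H :: "'b digraph"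
  assumes dpw: "dpw_constant d" and d0: "d \<ge> 0"
    and sH: "simple_digraph H" and sc: "strongly_connected H" and nH: "verts H \<noteq> {}"
    and tT: "tournament T"
  shows "k \<ge> 1 \<Longrightarrow> S \<subseteq> verts T \<Longrightarrow> \<not> cp T H S k \<Longrightarrow>
     \<exists>X. X \<subseteq> S \<and> real (card X) \<le> 2 * d * real (gsize H) * real k * log 2 (real k) \<and> \<not> cp T H (S - X) 1"
proof (induction k arbitrary: S rule: less_induct)
  case (less k)
  define c where "c = 2 * d * real (gsize H)"
  have c0: "c \<ge> 0" using d0 by (simp add: c_def)
  have finT: "finite (verts T)" using tT unfolding tournament_def simple_digraph_def by blast
  have ttT: "\<forall>u\<in>verts T. \<forall>v\<in>verts T. u \<noteq> v \<longrightarrow> ((u, v) \<in> arcs T \<longleftrightarrow> (v, u) \<notin> arcs T)"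
    using tT unfolding tournament_def by blast
  show ?case
  proof (cases "k = 1")
    case True
    then show ?thesis using less.prems by (intro exI[of _ "{}"]) simp
  next
    case False
    then have k2: "k \<ge> 2" using less.prems by simp
    define k1 where "k1 = k div 2"
    define k2' where "k2' = k - k1"
    have k1: "1 \<le> k1" "k1 < k" "1 \<le> k2'" "k2' < k" "k1 + k2' = k"
      using k2 unfolding k1_def k2'_def by auto
    show ?thesis
    proof (cases "cp T H S k1")
      case False
      from less.IH[OF k1(2) k1(1) less.prems(2) False] obtain X where
        X: "X \<subseteq> S" "real (card X) \<le> c * real k1 * log 2 (real k1)" "\<not> cp T H (S - X) 1"
        unfolding c_def by blast
      have "c * (real k1 * log 2 (real k1)) \<le> c * (real k * log 2 (real k))"
        using klogk_mono[OF k1(1) less_imp_le[OF k1(2)]] c0 by (rule mult_left_mono)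
      then have "real (card X) \<le> c * real k * log 2 (real k)" using X(2) by (simp add: mult.assoc)
      then show ?thesis using X unfolding c_def by blast
    next
      case True
      let ?G = "del_verts T (verts T - S)"
      have vG: "verts ?G = S" using less.prems(2) by auto
      have tG: "tournament ?G" using tT by (rule tournament_del)
      have "\<not> contains_k_disjoint_tm k ?G H" using cp_del[OF less.prems(2)] less.prems(3) by blast
      then obtain l r where dec: "interval_decomp ?G l r"
        and wd: "real (decomp_width ?G l r) \<le> d * real k * real (gsize H)"
        using pw_bound[OF dpw tG sH] by blast
      have lr: "\<forall>v\<in>S. l v \<le> r v" using dec vG unfolding interval_decomp_def by simp
      have Sne: "S \<noteq> {}" using True cp_empty[OF nH k1(1)] by blast
      have finS: "finite S" by (rule finite_subset[OF less.prems(2) finT])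
      define m where "m = Min (r ` S) - 1"
      have mlt: "m < r v" if "v \<in> S" for v
      proof -
        have "Min (r ` S) \<le> r v" using finS that by simp
        then show ?thesis unfolding m_def by simp
      qed
      define L where "L \<beta> = {v\<in>S. r v \<le> \<beta>}" for \<beta>
      have ex: "\<exists>n. cp T H (L (m + int n)) k1"
      proof
        have "r v \<le> Max (r ` S)" if "v \<in> S" for v using finS that by simp
        moreover have "Max (r ` S) > m"
        proof -
          have "Max (r ` S) \<in> r ` S" using finS Sne by (intro Max_in) simp_all
          then obtain v0 where "v0 \<in> S" "Max (r ` S) = r v0" by blast
          then show ?thesis using mlt by simp
        qed
        ultimately have "L (m + int (nat (Max (r ` S) - m))) = S" unfolding L_def by auto
        then show "cp T H (L (m + int (nat (Max (r ` S) - m)))) k1" using True by simp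
      qed
      define n0 where "n0 = (LEAST n. cp T H (L (m + int n)) k1)"
      have cpL: "cp T H (L (m + int n0)) k1" unfolding n0_def by (rule LeastI_ex[OF ex])
      define \<alpha> where "\<alpha> = m + int n0"
      define A where "A = {v\<in>S. r v < \<alpha>}"
      define B where "B = {v\<in>S. l v \<le> \<alpha> \<and> \<alpha> \<le> r v}"
      define C where "C = {v\<in>S. \<alpha> < l v}"
      have notA: "\<not> cp T H A k1"
      proof (cases n0)
        case 0
        then have "A = {}" using mlt unfolding A_def \<alpha>_def by force
        then show ?thesis using cp_empty[OF nH k1(1)] by simp
      next
        case (Suc n')
        then have "A = L (m + int n')" unfolding A_def L_def \<alpha>_def by auto
        moreover have "\<not> cp T H (L (m + int n')) k1"
          using not_less_Least[of n' "\<lambda>n. cp T H (L (m + int n)) k1"] Suc unfolding n0_def by simp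
        ultimately show ?thesis by simp
      qed
      have LC: "L \<alpha> \<inter> C = {}" using lr unfolding L_def C_def by force
      have notC: "\<not> cp T H C k2'"
      proof
        assume "cp T H C k2'"
        then have "cp T H (L \<alpha> \<union> C) (k1 + k2')" using cp_union cpL LC unfolding \<alpha>_def by blast
        moreover have "L \<alpha> \<union> C \<subseteq> S" unfolding L_def C_def by blast
        ultimately have "cp T H S k" using cp_mono k1(5) by (metis order_refl)
        with less.prems(3) show False by simp
      qed
      have AS: "A \<subseteq> S" "B \<subseteq> S" "C \<subseteq> S" unfolding A_def B_def C_def by blast+
      have SV: "S \<subseteq> verts T" using less.prems(2) .
      from less.IH[OF k1(2) k1(1) order_trans[OF AS(1) SV] notA] obtain XA where
        XA: "XA \<subseteq> A" "real (card XA) \<le> c * real k1 * log 2 (real k1)" "\<not> cp T H (A - XA) 1"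
        unfolding c_def by blast
      from less.IH[OF k1(4) k1(3) order_trans[OF AS(3) SV] notC] obtain XC where
        XC: "XC \<subseteq> C" "real (card XC) \<le> c * real k2' * log 2 (real k2')" "\<not> cp T H (C - XC) 1"
        unfolding c_def by blast
      have fG: "finite (verts ?G)" using finS vG by simp
      have "card {v\<in>verts ?G. l v \<le> \<alpha> \<and> \<alpha> \<le> r v} \<le> decomp_width ?G l r"
        by (rule card_le_width[OF fG])
      then have cardB: "card B \<le> decomp_width ?G l r" unfolding B_def by (simp only: vG)
      define X where "X = XA \<union> B \<union> XC"
      have "card X \<le> card (XA \<union> B) + card XC" unfolding X_def by (rule card_Un_le)
      moreover have "card (XA \<union> B) \<le> card XA + card B" by (rule card_Un_le)
      ultimately have "card X \<le> card XA + card B + card XC" by linarith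
      then have cX: "real (card X) \<le> real (card XA) + real (card B) + real (card XC)" by linarith
      have XS: "X \<subseteq> S" unfolding X_def using AS XA(1) XC(1) by blast
      have noarc: "\<forall>x\<in>C - XC. \<forall>y\<in>A - XA. (x, y) \<notin> arcs T"
      proof (intro ballI)
        fix x y assume x: "x \<in> C - XC" and y: "y \<in> A - XA"
        have xS: "x \<in> S" and yS: "y \<in> S" using x y unfolding A_def C_def by auto
        have ryl: "r y < l x" using x y unfolding A_def C_def by auto
        then have "(y, x) \<in> arcs ?G" using dec vG xS yS unfolding interval_decomp_def by blast
        then have yx: "(y, x) \<in> arcs T" by simp
        have "x \<noteq> y" using ryl lr xS by force
        moreover have "x \<in> verts T" "y \<in> verts T" using xS yS SV by auto
        ultimately have "((x, y) \<in> arcs T) = ((y, x) \<notin> arcs T)" using ttT by blast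
        then show "(x, y) \<notin> arcs T" using yx by blast
      qed
      have notX: "\<not> cp T H (S - X) 1"
      proof
        assume "cp T H (S - X) 1"
        then obtain \<phi> P where m: "tm_model T H \<phi> P" and W: "tm_verts H \<phi> P \<subseteq> S - X"
          unfolding cp_one by blast
        have "S - X \<subseteq> (A - XA) \<union> (C - XC)"
        proof
          fix v assume v: "v \<in> S - X"
          then have "v \<in> S" "v \<notin> B" "v \<notin> XA" "v \<notin> XC" unfolding X_def by auto
          then show "v \<in> (A - XA) \<union> (C - XC)" using lr unfolding A_def B_def C_def by force
        qed
        then have W': "tm_verts H \<phi> P \<subseteq> (A - XA) \<union> (C - XC)" using W by blast
        from tm_split[OF m sH sc W' noarc]
        show False
        proof
          assume "tm_verts H \<phi> P \<subseteq> A - XA"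
          then have "cp T H (A - XA) 1" unfolding cp_one using m by blast
          then show False using XA(3) by simp
        next
          assume "tm_verts H \<phi> P \<subseteq> C - XC"
          then have "cp T H (C - XC) 1" unfolding cp_one using m by blast
          then show False using XC(3) by simp
        qed
      qed
      have ar: "2 * real k1 * log 2 (real k1) + real k + 2 * real k2' * log 2 (real k2')
            \<le> 2 * real k * log 2 (real k)"
        using arith_klogk[OF k2] unfolding k1_def k2'_def .
      have dg: "0 \<le> d * real (gsize H)" using d0 by simp
      have "d * real (gsize H) * (2 * real k1 * log 2 (real k1) + real k + 2 * real k2' * log 2 (real k2'))
            \<le> d * real (gsize H) * (2 * real k * log 2 (real k))"
        using ar dg by (rule mult_left_mono)
      then have "real (card X) \<le> c * real k * log 2 (real k)"
        using cX XA(2) XC(2) cardB wd unfolding c_def by (simp add: algebra_simps)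
      then show ?thesis using XS notX unfolding c_def by blast
    qed
  qed
qed



lemma dpw_nonneg:
  assumes "dpw_constant d" shows "d \<ge> 0"
proof -
  define T0 :: "nat digraph" where "T0 = ({}, {})"
  define H0 :: "nat digraph" where "H0 = ({0}, {})"
  have vT0: "verts T0 = {}" "arcs T0 = {}" by (simp_all add: T0_def verts_def arcs_def)
  have vH0: "verts H0 = {0}" "arcs H0 = {}" by (simp_all add: H0_def verts_def arcs_def)
  have t: "tournament T0" unfolding tournament_def simple_digraph_def vT0 by simp
  have s: "simple_digraph H0" unfolding simple_digraph_def vH0 by simp
  have nc: "\<not> contains_tm T0 H0"
  proof
    assume "contains_tm T0 H0"
    then obtain \<phi> P where "tm_model T0 H0 \<phi> P" unfolding contains_tm_def by blast
    then have "\<phi> ` verts H0 \<subseteq> verts T0" by (rule tm_model_D(2))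
    then show False unfolding vT0 vH0 by simp
  qed
  have "real (pathwidth T0) \<le> d * real (gsize H0)"
    using assms t s nc unfolding dpw_constant_def by blast
  moreover have "gsize H0 = 1" unfolding gsize_def vH0 by simp
  ultimately show ?thesis by simp
qed

theorem lemma21:
  fixes T :: "'a digraph" and H :: "'b digraph" and k :: nat and d :: real
  assumes "dpw_constant d"
    and "simple_digraph H" and "strongly_connected H"
    and "k \<ge> 1"
    and "tournament T"
    and "\<not> contains_k_disjoint_tm k T H"
  shows "\<exists>X. X \<subseteq> verts T \<and> real (card X) \<le> 2 * d * real (gsize H) * real k * log 2 (real k)
             \<and> \<not> contains_tm (del_verts T X) H"
proof -
  have d0: "d \<ge> 0" using dpw_nonneg[OF assms(1)] .
  have nH: "verts H \<noteq> {}"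
  proof
    assume e: "verts H = {}"
    then have a: "arcs H = {}" using assms(2) unfolding simple_digraph_def by auto
    define \<phi>0 :: "nat \<Rightarrow> 'b \<Rightarrow> 'a" where "\<phi>0 = (\<lambda>_ _. undefined)"
    define P0 :: "nat \<Rightarrow> 'b \<times> 'b \<Rightarrow> 'a list" where "P0 = (\<lambda>_ _. [])"
    have m0: "tm_model T H (\<phi>0 i) (P0 i)" for i
      by (rule tm_modelI) (simp_all add: e a)
    moreover have t0: "tm_verts H (\<phi>0 i) (P0 i) = {}" for i unfolding tm_verts_def e a by simp
    ultimately have "contains_k_disjoint_tm k T H" unfolding contains_k_disjoint_tm_def
      by (intro exI[of _ \<phi>0] exI[of _ P0]) simp
    then show False using assms(6) by simp
  qed
  have "\<not> cp T H (verts T) k" using assms(6) cp_top by blast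
  from main_rec[OF assms(1) d0 assms(2,3) nH assms(5) assms(4) order_refl this]
  obtain X where X: "X \<subseteq> verts T" "real (card X) \<le> 2 * d * real (gsize H) * real k * log 2 (real k)"
    "\<not> cp T H (verts T - X) 1" by blast
  have "\<not> contains_tm (del_verts T X) H"
  proof
    assume "contains_tm (del_verts T X) H"
    then obtain \<phi> P where "tm_model (del_verts T X) H \<phi> P" unfolding contains_tm_def by blast
    then have "tm_model T H \<phi> P \<and> tm_verts H \<phi> P \<subseteq> verts T - X" by (simp only: tm_model_del)
    then have "cp T H (verts T - X) 1" unfolding cp_one by blast
    then show False using X(3) by simp
  qed
  then show ?thesis using X(1,2) by blast
qed

end
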